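(* Let $\mu$ be a log-concave probability measure on $\mathbb R^n$, let $\psi$ be a convex function on $\mathbb R^n$ (with $\psi\in L_1(\mu)$) and let $m$ be a median of $\psi$ with respect to $\mu$. Then $$\mu\Big(\Big\{x:\psi(x)<m-t\int|\psi-m|\,d\mu\Big\}\Big)\leqslant\frac12\exp(-t/16)$$ for all $t>0$. *)

theory Defs
  imports "HOL-Probability.Probability"
begin

text \<open>Log-concavity of a Borel measure on a Euclidean space (Borell):
  mu(lambda A + (1 - lambda) B) >= mu(A)^lambda mu(B)^(1 - lambda) for all compact A, B
  and 0 < lambda < 1. (Minkowski combinations of compact sets are compact, hence Borel.)\<close>
definition log_concave_measure :: "'a::euclidean_space measure \<Rightarrow> bool" where
  "log_concave_measure M \<longleftrightarrow>
     sets M = sets borel \<and>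
     (\<forall>A B (l::real). compact A \<and> compact B \<and> 0 < l \<and> l < 1 \<longrightarrow>
        measure M {l *\<^sub>R a + (1 - l) *\<^sub>R b | a b. a \<in> A \<and> b \<in> B}
          \<ge> measure M A powr l * measure M B powr (1 - l))"

definition is_median :: "'a measure \<Rightarrow> ('a \<Rightarrow> real) \<Rightarrow> real \<Rightarrow> bool" where
  "is_median M \<psi> m \<longleftrightarrow>
     measure M {x \<in> space M. \<psi> x \<ge> m} \<ge> 1/2 \<and> measure M {x \<in> space M. \<psi> x \<le> m} \<ge> 1/2"

end

theory Submission
  imports Defs
begin

lemma final_ineq:
  fixes a b t l :: real
  assumes a: "0 < a" and b: "3/4 \<le> b" and t: "0 < t" and l: "l = 4/(t+4)"
    and h: "a powr l * b powr (1 - l) \<le> 1/2"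
  shows "a \<le> 1/2 * exp (- t / 16)"
proof -
  have bp: "0 < b" using b by simp
  have l0: "0 < l" "l < 1" using t l by (auto simp: divide_less_eq)
  have "ln (a powr l * b powr (1 - l)) \<le> ln (1/2)"
    using h a bp by (subst ln_le_cancel_iff) auto
  hence h1: "l * ln a + (1 - l) * ln b \<le> - ln 2"
    using a bp by (simp add: ln_mult ln_powr ln_div)
  have "1 - l = l * (t/4)" using l t by (simp add: field_simps)
  moreover have "l * (1 + t/4) = 1" using l t by (simp add: field_simps)
  ultimately have "l * (ln a + (t/4) * ln b) \<le> l * (- ln 2 - (t/4) * ln 2)"
  proof -
    assume e1: "1 - l = l * (t/4)" and e2: "l * (1 + t/4) = 1"
    have "l * (ln a + (t/4) * ln b) = l * ln a + (1 - l) * ln b" by (simp only: e1) (simp add: algebra_simps)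
    also have "\<dots> \<le> - ln 2" by (rule h1)
    also have "- ln 2 = l * (- ln 2 - (t/4) * ln 2)" proof -
      have "l * (- ln 2 - (t/4) * ln 2) = - (l * (1 + t/4)) * ln 2" by (simp add: algebra_simps)
      also have "\<dots> = - ln 2" using e2 by simp
      finally show ?thesis by simp
    qed
    finally show ?thesis .
  qed
  hence h2: "ln a + (t/4) * ln b \<le> - ln 2 - (t/4) * ln 2"
    using l0 by (simp add: mult_le_cancel_left_pos)
  have "ln (3/4) \<le> ln b" using b by simp
  moreover have "ln (3/4::real) = ln 3 - ln 4" by (simp add: ln_div)
  moreover have "ln (4::real) = 2 * ln 2"
    using ln_realpow[of "2::real" 2] by simp
  moreover have "ln (3/2::real) \<ge> 1/4"
  proof -
    have "1 + (-1/4) \<le> exp (-1/4::real)" by (rule exp_ge_add_one_self)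
    hence "exp (1/4::real) \<le> 4/3" by (simp add: exp_minus field_simps)
    hence "exp (1/4::real) \<le> 3/2" by simp
    hence "ln (exp (1/4::real)) \<le> ln (3/2)" by (subst ln_le_cancel_iff) auto
    thus ?thesis by simp
  qed
  moreover have "ln (3/2::real) = ln 3 - ln 2" by (simp add: ln_div)
  ultimately have "(t/4) * (ln 2 + ln b) \<ge> (t/4) * (1/4)"
    using t by (intro mult_left_mono) auto
  hence "ln a \<le> - ln 2 - t/16" using h2 by (simp add: algebra_simps)
  hence "exp (ln a) \<le> exp (- ln 2 - t/16)" by simp
  moreover have "exp (- ln 2 - t/16) = exp (- ln 2) * exp (- t/16)"
    by (simp add: exp_add[symmetric])
  moreover have "exp (- ln 2) = (1/2::real)" by (simp add: exp_minus)
  ultimately show ?thesis using a by simp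
qed


theorem theorem5p6:
  fixes M :: "'a::euclidean_space measure" and \<psi> :: "'a \<Rightarrow> real" and m t :: real
  assumes "prob_space M"
    and "log_concave_measure M"
    and "convex_on UNIV \<psi>"
    and "integrable M \<psi>"
    and "is_median M \<psi> m"
    and "t > 0"
  shows "measure M {x \<in> space M. \<psi> x < m - t * (\<integral>x. \<bar>\<psi> x - m\<bar> \<partial>M)}
           \<le> 1/2 * exp (- t / 16)"
proof -
  interpret P: prob_space M by fact
  have sets_M: "sets M = sets borel" using assms(2) unfolding log_concave_measure_def by simp
  have space_M: "space M = UNIV" using sets_eq_imp_space_eq[OF sets_M] by simp
  have logc: "\<And>A B l. compact A \<Longrightarrow> compact B \<Longrightarrow> 0 < l \<Longrightarrow> l < (1::real) \<Longrightarrow>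
        measure M {l *\<^sub>R a + (1 - l) *\<^sub>R b | a b. a \<in> A \<and> b \<in> B}
          \<ge> measure M A powr l * measure M B powr (1 - l)"
    using assms(2) unfolding log_concave_measure_def by blast
  have cont: "continuous_on UNIV \<psi>" by (rule convex_on_continuous[OF open_UNIV assms(3)])
  have [measurable]: "\<psi> \<in> borel_measurable M"
    by (subst measurable_cong_sets[OF sets_M refl]) (rule borel_measurable_continuous_onI[OF cont])
  have int: "integrable M (\<lambda>x. \<bar>\<psi> x - m\<bar>)"
    using assms(4) by (intro integrable_abs integrable_diff) auto
  define I where "I = (\<integral>x. \<bar>\<psi> x - m\<bar> \<partial>M)"
  have I0: "I \<ge> 0" unfolding I_def by (rule integral_nonneg_AE) auto
  have setsM1: "{x. \<psi> x < c} \<in> sets M" for c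
  proof -
    have "{x\<in>space M. \<psi> x < c} \<in> sets M" by measurable
    thus ?thesis using space_M by simp
  qed
  have setsM2: "{x. c \<le> \<psi> x} \<in> sets M" for c
  proof -
    have "{x\<in>space M. c \<le> \<psi> x} \<in> sets M" by measurable
    thus ?thesis using space_M by simp
  qed
  have setsM3: "{x. \<psi> x \<noteq> c} \<in> sets M" for c
  proof -
    have "{x\<in>space M. \<psi> x \<noteq> c} \<in> sets M" by measurable
    thus ?thesis using space_M by simp
  qed
  have setsM4: "{x\<in>space M. c \<le> \<bar>\<psi> x - m\<bar>} \<in> sets M" for c
    by measurable
  note setsM = setsM1 setsM2
  have medC: "measure M {x. \<psi> x < m} \<le> 1/2"
  proof -
    have "measure M {x. \<psi> x \<ge> m} \<ge> 1/2" using assms(5) space_M unfolding is_median_def by simp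
    moreover have "{x. \<psi> x < m} = space M - {x. m \<le> \<psi> x}" using space_M by auto
    ultimately show ?thesis using P.prob_compl[OF setsM(2)[of m]] by simp
  qed
  show ?thesis
  proof (cases "I = 0")
    case True
    have "AE x in M. \<bar>\<psi> x - m\<bar> = 0"
      using integral_nonneg_eq_0_iff_AE[OF int] True unfolding I_def by simp
    hence "emeasure M {x. \<psi> x \<noteq> m} = 0"
      using AE_iff_measurable[of "{x. \<psi> x \<noteq> m}" M "\<lambda>x. \<bar>\<psi> x - m\<bar> = 0"] space_M setsM3[of m]
      by auto
    hence "measure M {x. \<psi> x \<noteq> m} = 0" by (simp add: measure_def)
    moreover have "{x. \<psi> x \<noteq> m} \<in> sets M" by (rule setsM3)
    moreover have "{x \<in> space M. \<psi> x < m - t * I} \<subseteq> {x. \<psi> x \<noteq> m}" using True by auto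
    ultimately have "measure M {x \<in> space M. \<psi> x < m - t * I} \<le> 0"
      by (metis P.finite_measure_mono)
    moreover have "0 \<le> 1/2 * exp (- t / 16)" by simp
    ultimately show ?thesis unfolding I_def by linarith
  next
    case False
    hence Ipos: "I > 0" using I0 by simp
    define u where "u = t * I"
    define h where "h = 4 * I"
    define l where "l = 4 / (t + 4)"
    have upos: "u > 0" and hpos: "h > 0" using Ipos assms(6) by (auto simp: u_def h_def)
    have l0: "0 < l" "l < 1" using assms(6) by (auto simp: l_def divide_less_eq)
    have e: "1 - l = t/(t+4)" using assms(6) by (simp add: l_def field_simps)
    have e2: "l*u = (1-l)*h" unfolding e by (simp add: l_def u_def h_def)
    have "l * (m - u) + (1 - l) * (m + h) = m - l*u + (1-l)*h" by (simp add: algebra_simps)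
    hence key: "l * (m - u) + (1 - l) * (m + h) = m" using e2 by linarith
    define A where "A = {x. \<psi> x < m - u}"
    define B where "B = {x. \<psi> x < m + h}"
    have eqS: "{x \<in> space M. \<psi> x < m - t * I} = A" using space_M by (auto simp: A_def u_def)
    have mB: "measure M B \<ge> 3/4"
    proof -
      have "measure M {x \<in> space M. \<bar>\<psi> x - m\<bar> \<ge> h} \<le> I / h"
        unfolding I_def by (rule integral_Markov_inequality_measure[OF int _ _ hpos]) auto
      also have "I / h = 1/4" using Ipos by (simp add: h_def)
      finally have 1: "measure M {x \<in> space M. \<bar>\<psi> x - m\<bar> \<ge> h} \<le> 1/4" .
      have "{x. m + h \<le> \<psi> x} \<subseteq> {x \<in> space M. \<bar>\<psi> x - m\<bar> \<ge> h}" using space_M hpos by auto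
      hence "measure M {x. m + h \<le> \<psi> x} \<le> 1/4"
        using 1 P.finite_measure_mono[of "{x. m + h \<le> \<psi> x}" "{x \<in> space M. \<bar>\<psi> x - m\<bar> \<ge> h}"]
        using setsM4[of h] by linarith
      moreover have "B = space M - {x. m + h \<le> \<psi> x}" using space_M by (auto simp: B_def)
      ultimately show ?thesis using P.prob_compl[OF setsM(2)[of "m + h"]] by simp
    qed
    show ?thesis
    proof (cases "measure M A = 0")
      case True
      thus ?thesis using eqS unfolding I_def by (simp add: I_def)
    next
      case False
      hence apos: "measure M A > 0" by (simp add: zero_less_measure_iff)
      define K where "K = (\<lambda>c n. {x. norm x \<le> real n \<and> \<psi> x \<le> c - 1 / real (Suc n)})"
      have Kcomp: "compact (K c n)" for c n
      proof -
        have "closed (K c n)" unfolding K_def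
          by (intro closed_Collect_conj closed_Collect_le continuous_intros cont) 
        moreover have "bounded (K c n)" unfolding K_def bounded_iff by auto
        ultimately show ?thesis using compact_eq_bounded_closed by blast
      qed
      have Kinc: "incseq (K c)" for c
      proof (rule incseq_SucI)
        fix n
        have "1 / real (Suc (Suc n)) \<le> 1 / real (Suc n)" by (simp add: frac_le)
        show "K c n \<subseteq> K c (Suc n)"
        proof
          fix x assume "x \<in> K c n"
          hence x1: "norm x \<le> real n" and x2: "\<psi> x \<le> c - 1 / real (Suc n)" unfolding K_def by blast+
          have "norm x \<le> real (Suc n)" using x1 by simp
          moreover have "\<psi> x \<le> c - 1 / real (Suc (Suc n))"
            using x2 \<open>1 / real (Suc (Suc n)) \<le> 1 / real (Suc n)\<close> by linarith
          ultimately show "x \<in> K c (Suc n)" unfolding K_def by blast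
        qed
      qed
      have Klt: "x \<in> K c n \<Longrightarrow> \<psi> x < c" for x c n
      proof -
        assume "x \<in> K c n"
        hence "\<psi> x \<le> c - 1 / real (Suc n)" unfolding K_def by blast
        moreover have "1 / real (Suc n) > 0" by simp
        ultimately show "\<psi> x < c" by linarith
      qed
      have Kun: "(\<Union>n. K c n) = {x. \<psi> x < c}" for c
      proof
        show "(\<Union>n. K c n) \<subseteq> {x. \<psi> x < c}" using Klt by blast
        show "{x. \<psi> x < c} \<subseteq> (\<Union>n. K c n)"
        proof
          fix x assume "x \<in> {x. \<psi> x < c}"
          hence "c - \<psi> x > 0" by simp
          then obtain n1 where n1: "inverse (real (Suc n1)) < c - \<psi> x" using reals_Archimedean by blast
          obtain n2 where n2: "norm x \<le> real n2" using real_arch_simple by blast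
          define n where "n = max n1 n2"
          have "1 / real (Suc n) \<le> 1 / real (Suc n1)" by (simp add: n_def frac_le)
          hence "\<psi> x \<le> c - 1 / real (Suc n)" using n1 by (simp add: inverse_eq_divide)
          moreover have "norm x \<le> real n" using n2 by (simp add: n_def)
          ultimately show "x \<in> (\<Union>n. K c n)" unfolding K_def by blast
        qed
      qed
      have Kmeas: "K c n \<in> sets M" for c n
        using Kcomp[of c n] sets_M by (simp add: compact_imp_closed borel_closed)
      have Klim: "(\<lambda>n. measure M (K c n)) \<longlonglongrightarrow> measure M {x. \<psi> x < c}" for c
        using P.finite_Lim_measure_incseq[of "K c"] Kinc[of c] Kmeas Kun[of c] by auto
      have bnd: "measure M (K (m - u) n) powr l * measure M (K (m + h) n) powr (1 - l)
                   \<le> measure M {x. \<psi> x < m}" for n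
      proof -
        have "measure M (K (m - u) n) powr l * measure M (K (m + h) n) powr (1 - l)
          \<le> measure M {l *\<^sub>R a + (1 - l) *\<^sub>R b | a b. a \<in> K (m - u) n \<and> b \<in> K (m + h) n}"
          by (rule logc[OF Kcomp Kcomp l0])
        also have "\<dots> \<le> measure M {x. \<psi> x < m}"
        proof (rule P.finite_measure_mono[OF _ setsM(1)])
          show "{l *\<^sub>R a + (1 - l) *\<^sub>R b | a b. a \<in> K (m - u) n \<and> b \<in> K (m + h) n} \<subseteq> {x. \<psi> x < m}"
          proof clarify
            fix a b assume a: "a \<in> K (m - u) n" and b: "b \<in> K (m + h) n"
            have pa: "\<psi> a < m - u" using Klt[OF a] .
            have pb: "\<psi> b < m + h" using Klt[OF b] .
            have "\<psi> ((1 - (1 - l)) *\<^sub>R a + (1 - l) *\<^sub>R b) \<le> (1 - (1 - l)) * \<psi> a + (1 - l) * \<psi> b"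
              using convex_onD[OF assms(3), of "1 - l" a b] l0 by simp
            hence "\<psi> (l *\<^sub>R a + (1 - l) *\<^sub>R b) \<le> l * \<psi> a + (1 - l) * \<psi> b" by simp
            also have "\<dots> < l * (m - u) + (1 - l) * (m + h)"
              using pa pb l0 by (intro add_less_le_mono mult_strict_left_mono mult_left_mono) auto
            finally show "\<psi> (l *\<^sub>R a + (1 - l) *\<^sub>R b) < m" using key by simp
          qed
        qed
        finally show ?thesis .
      qed
      have lim: "(\<lambda>n. measure M (K (m - u) n) powr l * measure M (K (m + h) n) powr (1 - l))
         \<longlonglongrightarrow> measure M A powr l * measure M B powr (1 - l)"
        unfolding A_def B_def
        by (intro tendsto_mult tendsto_powr Klim tendsto_const)
           (use apos mB in \<open>auto simp: A_def B_def\<close>)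
      have "measure M A powr l * measure M B powr (1 - l) \<le> measure M {x. \<psi> x < m}"
        by (rule tendsto_upperbound[OF lim]) (auto simp: bnd)
      hence "measure M A powr l * measure M B powr (1 - l) \<le> 1/2" using medC by simp
      hence "measure M A \<le> 1/2 * exp (- t / 16)"
        by (rule final_ineq[OF apos mB assms(6) l_def])
      thus ?thesis using eqS by (simp add: I_def)
    qed
  qed
qed

end
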